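(* Under the standing assumptions (A) below, let $\Omega'=\{t\in[0,L]:\tau(t)\ne\pm\lambda\}\cup\Omega$. If $I$ is a connected component of $\Omega'$, then $I\setminus\Omega$ is finite.
   Context: Standing assumptions (A): $n\ge2$, $L>0$, $\beta\colon[0,L]\to(0,\infty)$ of bounded variation with $1/\beta$ bounded; $\tau\in W^{1,\infty}((0,L);S^{n-1})$ with $k=\operatorname{ess\,sup}|\tau'|>0$; $\lambda\in S^{n-1}$ and $u\in W^{1,\infty}((0,L);\mathbb{R}^n)\setminus\{0\}$ such that $u'+(u\cdot\tau')\tau=\beta(\lambda-(\lambda\cdot\tau)\tau)$ and $|u|\tau'=ku$ a.e. in $(0,L)$; $f=k|u|$, which then satisfies $f'=\beta\,\lambda\cdot\tau'$ and $f(\tau''+k^2\tau)=\beta k^2\,\mathrm{proj}^\perp_{\tau,\tau'}(\lambda)$ weakly in $(0,L)$ (where $\mathrm{proj}^\perp_{V,W}$ is the orthogonal projection onto the orthogonal complement of $\mathrm{span}\{V,W\}$); $\Omega=\{t\in[0,L]:f(t)>0\}$ (open relative to $[0,L]$); and $\tau(t),\tau'(t),\lambda$ are linearly dependent for every $t\in\Omega$ (note $\tau'$ is continuous on $\Omega$). *)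

theory Defs
  imports "HOL-Analysis.Analysis" "HOL-Probability.Essential_Supremum"
begin

definition bounded_variation_on :: "real set \<Rightarrow> (real \<Rightarrow> real) \<Rightarrow> bool" where
  "bounded_variation_on S g \<longleftrightarrow>
     (\<exists>B. \<forall>xs. sorted xs \<and> set xs \<subseteq> S \<longrightarrow>
        (\<Sum>i<length xs - 1. \<bar>g (xs ! Suc i) - g (xs ! i)\<bar>) \<le> B)"

end

theory Submission
  imports Defs
begin

lemma AE_negl:
  fixes a b :: real
  assumes "AE t in lebesgue_on {a<..<b}. P t"
  shows "\<exists>N. negligible N \<and> (\<forall>t\<in>{a<..<b}-N. P t)"
proof -
  have ms: "{a<..<b} \<in> sets lebesgue" by (metis box_real(1) lmeasurable_box fmeasurableD)
  have "AE t in lebesgue. t \<in> {a<..<b} \<longrightarrow> P t"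
    using assms ms by (simp add: AE_restrict_space_iff)
  then obtain N where N: "\<And>x. x \<in> space lebesgue - N \<Longrightarrow> x \<in> {a<..<b} \<longrightarrow> P x" "N \<in> null_sets lebesgue"
    by (rule AE_E3) blast
  show ?thesis
    using N by (intro exI[of _ N]) (auto simp: negligible_iff_null_sets)
qed

lemma K_mono:
  fixes \<phi> :: "real \<Rightarrow> real"
  assumes ab: "a \<le> b" and lip: "C-lipschitz_on {a..b} \<phi>" and N: "negligible N"
    and der: "\<And>t. t \<in> {a<..<b} - N \<Longrightarrow> \<exists>d\<ge>0. (\<phi> has_real_derivative d) (at t)"
  shows "\<phi> a \<le> \<phi> b"
proof (rule ccontr)
  assume "\<not> \<phi> a \<le> \<phi> b"
  hence lt: "\<phi> b < \<phi> a" by simp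
  with ab have ab': "a < b" by (cases "a = b") auto
  define \<epsilon> where "\<epsilon> = (\<phi> a - \<phi> b) / (2 * (b - a))"
  have \<epsilon>: "\<epsilon> > 0" using lt ab' by (simp add: \<epsilon>_def)
  define \<psi> where "\<psi> t = \<phi> t + \<epsilon> * t" for t
  have "\<psi> b - \<psi> a = \<phi> b - \<phi> a + \<epsilon> * (b - a)" by (simp add: \<psi>_def algebra_simps)
  also have "\<epsilon> * (b - a) = (\<phi> a - \<phi> b) / 2" using ab' by (simp add: \<epsilon>_def field_simps)
  finally have psi_lt: "\<psi> b < \<psi> a" using lt by argo
  have C0: "C \<ge> 0" using lip lipschitz_on_nonneg by blast
  have le: "\<epsilon>-lipschitz_on {a..b} (\<lambda>t. \<epsilon> * t)"
    by (rule lipschitz_onI) (use \<epsilon> in \<open>auto simp: dist_real_def abs_mult right_diff_distrib[symmetric]\<close>)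
  have lip\<psi>: "(C + \<epsilon>)-lipschitz_on {a..b} \<psi>"
    unfolding \<psi>_def by (intro lipschitz_on_add lip le)
  have cont: "continuous_on {a..b} \<psi>"
    using lip\<psi> lipschitz_on_continuous_on by blast
  let ?S = "N \<inter> {a<..<b}"
  have negS: "negligible (\<psi> ` ?S)"
  proof (rule negligible_locally_Lipschitz_image)
    show "negligible ?S" using N negligible_subset by blast
    fix x assume x: "x \<in> ?S"
    show "\<exists>T B. open T \<and> x \<in> T \<and> (\<forall>y\<in>?S \<inter> T. norm (\<psi> y - \<psi> x) \<le> B * norm (y - x))"
    proof (intro exI conjI)
      show "\<forall>y\<in>?S \<inter> UNIV. norm (\<psi> y - \<psi> x) \<le> (C+\<epsilon>) * norm (y - x)"
        using lipschitz_onD[OF lip\<psi>] x by (auto simp: dist_norm)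
    qed auto
  qed auto
  have "\<not> negligible {\<psi> b<..<\<psi> a}"
    using psi_lt by (subst box_real(1)[symmetric], subst negligible_interval) auto
  then obtain y where y: "y \<in> {\<psi> b<..<\<psi> a}" "y \<notin> \<psi> ` ?S"
    using negS negligible_subset[of "\<psi> ` ?S" "{\<psi> b<..<\<psi> a}"] by blast
  define A where "A = {t \<in> {a..b}. y \<le> \<psi> t}"
  have Acl: "closed A" unfolding A_def
    using continuous_closed_preimage[OF cont closed_atLeastAtMost, of "{y..}"]
    by (simp add: vimage_def Int_def conj_commute)
  have aA: "a \<in> A" using y ab by (auto simp: A_def)
  have Abdd: "bdd_above A" by (auto simp: A_def bdd_above_def)
  define s where "s = Sup A"
  have sA: "s \<in> A" unfolding s_def using Acl aA Abdd closed_contains_Sup by blast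
  have s_ge: "\<And>t. t \<in> A \<Longrightarrow> t \<le> s" unfolding s_def using Abdd cSup_upper by blast
  have sb: "s < b" using sA y by (cases "s = b") (auto simp: A_def)
  have right: "\<psi> t < y" if "s < t" "t \<le> b" for t
  proof (rule ccontr)
    assume "\<not> \<psi> t < y"
    hence "t \<in> A" using that sA by (auto simp: A_def)
    with s_ge that show False by force
  qed
  have eq: "\<psi> s = y"
  proof (rule ccontr)
    assume "\<psi> s \<noteq> y"
    with sA have gt: "\<psi> s > y" by (auto simp: A_def)
    have "((\<lambda>t. \<psi> t) \<longlongrightarrow> \<psi> s) (at s within {a..b})"
      using cont sA by (auto simp: A_def continuous_on_def)
    then have "\<forall>\<^sub>F t in at s within {a..b}. \<psi> t > y"
      using gt order_tendstoD(1) by blast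
    then obtain d where d: "d > 0" "\<And>t. t \<in> {a..b} \<Longrightarrow> t \<noteq> s \<Longrightarrow> dist t s < d \<Longrightarrow> \<psi> t > y"
      by (auto simp: eventually_at)
    define t where "t = min b (s + d/2)"
    have "s < t" "t \<le> b" using sb d by (auto simp: t_def)
    moreover have "\<psi> t > y"
      using d(2)[of t] sA sb d(1) by (auto simp: t_def A_def dist_real_def)
    ultimately show False using right by force
  qed
  have sa: "a < s" using eq y sA by (cases "s = a") (auto simp: A_def)
  have sN: "s \<notin> N" using y eq sa sb by auto
  obtain d where d: "d \<ge> 0" "(\<phi> has_real_derivative d) (at s)"
    using der[of s] sa sb sN by auto
  have "(\<psi> has_real_derivative d + \<epsilon>) (at s)"
    unfolding \<psi>_def using d(2) by (auto intro!: derivative_eq_intros)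
  then obtain e where e: "e > 0" "\<And>h. h > 0 \<Longrightarrow> h < e \<Longrightarrow> \<psi> s < \<psi> (s + h)"
    using DERIV_pos_inc_right[of \<psi> "d+\<epsilon>" s] d \<epsilon> by auto
  define h where "h = min (e/2) (b - s)"
  have "h > 0" "h < e" using e sb by (auto simp: h_def)
  hence "\<psi> s < \<psi> (s + h)" using e by blast
  moreover have "\<psi> (s + h) < y" using right[of "s+h"] \<open>h>0\<close> by (auto simp: h_def)
  ultimately show False using eq by simp
qed

lemma sign_const:
  fixes h :: "real \<Rightarrow> real"
  assumes "continuous_on {c<..<d} h" "\<And>t. t \<in> {c<..<d} \<Longrightarrow> h t \<noteq> 0"
  shows "(\<forall>t\<in>{c<..<d}. h t > 0) \<or> (\<forall>t\<in>{c<..<d}. h t < 0)"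
proof (rule ccontr)
  assume "\<not> ?thesis"
  then obtain x y where xy: "x \<in> {c<..<d}" "y \<in> {c<..<d}" "h x \<le> 0" "h y \<ge> 0" by force
  with assms(2) have xy': "h x < 0" "h y > 0" by (auto simp: less_le)
  have "connected (h ` {c<..<d})"
    by (intro connected_continuous_image assms(1)) (simp add: is_interval_connected)
  hence "{h x..h y} \<subseteq> h ` {c<..<d}" using connected_contains_Icc xy by blast
  hence "0 \<in> h ` {c<..<d}" using xy' by auto
  thus False using assms(2) by auto
qed

locale gapctx =
  fixes f g h \<beta> :: "real \<Rightarrow> real" and a b :: real and N :: "real set" and Cf Cg :: real
  assumes ab: "a < b"
  and lipf: "Cf-lipschitz_on {a..b} f" and lipg: "Cg-lipschitz_on {a..b} g"
  and N: "negligible N"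
  and derg: "\<And>t. t \<in> {a<..<b} - N \<Longrightarrow> (g has_real_derivative h t) (at t)"
  and derf: "\<And>t. t \<in> {a<..<b} - N \<Longrightarrow> (f has_real_derivative \<beta> t * h t) (at t)"
  and hcont: "continuous_on {a<..<b} h"
  and hnz: "\<And>t. t \<in> {a<..<b} \<Longrightarrow> \<bar>g t\<bar> < 1 \<Longrightarrow> h t \<noteq> 0"
  and bpos: "\<And>t. t \<in> {a<..<b} \<Longrightarrow> \<beta> t > 0"
  and fa: "f a = 0" and fb: "f b = 0" and fpos: "\<And>t. t \<in> {a<..<b} \<Longrightarrow> f t > 0"
  and ga: "\<bar>g a\<bar> < 1" and gb: "\<bar>g b\<bar> < 1" and gle: "\<And>t. t \<in> {a..b} \<Longrightarrow> \<bar>g t\<bar> \<le> 1"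
begin

lemma Kcomb:
  assumes "a \<le> c" "c \<le> d" "d \<le> b"
    and D: "\<And>t. t \<in> {c<..<d} - N \<Longrightarrow> p * (\<beta> t * h t) + q * h t \<ge> 0"
  shows "p * f c + q * g c \<le> p * f d + q * g d"
proof -
  have lip: "(\<bar>p\<bar> * Cf + \<bar>q\<bar> * Cg)-lipschitz_on {c..d} (\<lambda>t. p * f t + q * g t)"
    by (intro lipschitz_on_add lipschitz_on_cmult_real lipschitz_on_subset[OF lipf]
        lipschitz_on_subset[OF lipg]) (use assms in auto)
  show ?thesis
  proof (rule K_mono[OF \<open>c \<le> d\<close> lip N])
    fix t assume t: "t \<in> {c<..<d} - N"
    hence t': "t \<in> {a<..<b} - N" using assms by auto
    have "((\<lambda>t. p * f t + q * g t) has_real_derivative p * (\<beta> t * h t) + q * h t) (at t)"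
      by (rule DERIV_add[OF DERIV_cmult[OF derf[OF t']] DERIV_cmult[OF derg[OF t']]])
    thus "\<exists>d\<ge>0. ((\<lambda>t. p * f t + q * g t) has_real_derivative d) (at t)"
      using D[OF t] by blast
  qed
qed

lemma gcont: "continuous_on {a..b} g"
  using lipg lipschitz_on_continuous_on by blast

lemma sign_sub:
  assumes "a \<le> c" "d \<le> b" "\<And>t. t \<in> {c<..<d} \<Longrightarrow> \<bar>g t\<bar> < 1"
  shows "(\<forall>t\<in>{c<..<d}. h t > 0) \<or> (\<forall>t\<in>{c<..<d}. h t < 0)"
  by (rule sign_const) (use assms hnz in \<open>auto intro: continuous_on_subset[OF hcont]\<close>)

lemma no_pos_end:
  assumes "a \<le> c" "c < d" "d \<le> b" "f d = 0" "\<And>t. t \<in> {c<..<d} \<Longrightarrow> h t > 0"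
  shows False
proof -
  define m where "m = (c + d) / 2"
  have m: "c < m" "m < d" using assms by (auto simp: m_def)
  have "1 * f m + 0 * g m \<le> 1 * f d + 0 * g d"
  proof (rule Kcomb)
    fix t assume t: "t \<in> {m<..<d} - N"
    hence "\<beta> t > 0" "h t > 0" using assms m by (auto intro!: bpos)
    thus "0 \<le> 1 * (\<beta> t * h t) + 0 * h t" by simp
  qed (use assms m in auto)
  moreover have "f m > 0" using fpos m assms by auto
  ultimately show False using assms by simp
qed

lemma no_neg_start:
  assumes "a \<le> c" "c < d" "d \<le> b" "f c = 0" "\<And>t. t \<in> {c<..<d} \<Longrightarrow> h t < 0"
  shows False
proof -
  define m where "m = (c + d) / 2"
  have m: "c < m" "m < d" using assms by (auto simp: m_def)
  have "(-1) * f c + 0 * g c \<le> (-1) * f m + 0 * g m"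
  proof (rule Kcomb)
    fix t assume t: "t \<in> {c<..<m} - N"
    hence "\<beta> t > 0" "h t < 0" using assms m by (auto intro!: bpos)
    thus "0 \<le> -1 * (\<beta> t * h t) + 0 * h t" using mult_pos_neg[of "\<beta> t" "h t"] by simp
  qed (use assms m in auto)
  moreover have "f m > 0" using fpos m assms by auto
  ultimately show False using assms by simp
qed

definition "C = {t \<in> {a..b}. \<bar>g t\<bar> = 1}"

lemma C_closed: "closed C"
  unfolding C_def
  by (rule continuous_closed_preimage_constant) (auto intro: continuous_intros gcont)

lemma C_ne: "C \<noteq> {}"
proof
  assume e: "C = {}"
  have "\<bar>g t\<bar> < 1" if "t \<in> {a<..<b}" for t
    using gle[of t] e that unfolding C_def by (force simp: less_le)
  hence "(\<forall>t\<in>{a<..<b}. h t > 0) \<or> (\<forall>t\<in>{a<..<b}. h t < 0)"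
    using sign_sub[of a b] by auto
  thus False using no_pos_end[of a b] no_neg_start[of a b] ab fa fb by auto
qed

definition "s1 = Inf C"
definition "s2 = Sup C"

lemma s1C: "s1 \<in> C" unfolding s1_def
  by (rule closed_contains_Inf) (use C_ne C_closed in \<open>auto simp: C_def bdd_below_def\<close>)
lemma s2C: "s2 \<in> C" unfolding s2_def
  by (rule closed_contains_Sup) (use C_ne C_closed in \<open>auto simp: C_def bdd_above_def\<close>)
lemma s1_le: "t \<in> C \<Longrightarrow> s1 \<le> t" unfolding s1_def
  by (rule cInf_lower) (auto simp: C_def bdd_below_def)
lemma s2_ge: "t \<in> C \<Longrightarrow> t \<le> s2" unfolding s2_def
  by (rule cSup_upper) (auto simp: C_def bdd_above_def)

lemma s_bounds: "a < s1" "s1 \<le> s2" "s2 < b"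
proof -
  show "a < s1" using s1C ga by (cases "s1 = a") (auto simp: C_def)
  show "s2 < b" using s2C gb by (cases "s2 = b") (auto simp: C_def)
  show "s1 \<le> s2" using s1C s2_ge by blast
qed

lemma left_abs: "t \<in> {a<..<s1} \<Longrightarrow> \<bar>g t\<bar> < 1"
  using s1_le[of t] gle[of t] s_bounds by (force simp: C_def less_le)

lemma right_abs: "t \<in> {s2<..<b} \<Longrightarrow> \<bar>g t\<bar> < 1"
  using s2_ge[of t] gle[of t] s_bounds by (force simp: C_def less_le)

lemma left_pos: "t \<in> {a<..<s1} \<Longrightarrow> h t > 0"
proof -
  have "(\<forall>t\<in>{a<..<s1}. h t > 0) \<or> (\<forall>t\<in>{a<..<s1}. h t < 0)"
    by (rule sign_sub) (use left_abs s_bounds in auto)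
  moreover have "\<not> (\<forall>t\<in>{a<..<s1}. h t < 0)"
  proof
    assume "\<forall>t\<in>{a<..<s1}. h t < 0"
    thus False using no_neg_start[of a s1] s_bounds fa by auto
  qed
  ultimately show "t \<in> {a<..<s1} \<Longrightarrow> h t > 0" by blast
qed

lemma right_neg: "t \<in> {s2<..<b} \<Longrightarrow> h t < 0"
proof -
  have "(\<forall>t\<in>{s2<..<b}. h t > 0) \<or> (\<forall>t\<in>{s2<..<b}. h t < 0)"
    by (rule sign_sub) (use right_abs s_bounds in auto)
  moreover have "\<not> (\<forall>t\<in>{s2<..<b}. h t > 0)"
  proof
    assume "\<forall>t\<in>{s2<..<b}. h t > 0"
    thus False using no_pos_end[of s2 b] s_bounds fb by auto
  qed
  ultimately show "t \<in> {s2<..<b} \<Longrightarrow> h t < 0" by blast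
qed

lemma g_s1: "g s1 = 1"
proof -
  have "0 * f a + 1 * g a \<le> 0 * f s1 + 1 * g s1"
    by (rule Kcomb) (use s_bounds left_pos in \<open>auto intro: less_imp_le\<close>)
  hence "g a \<le> g s1" by simp
  thus ?thesis using s1C ga by (auto simp: C_def abs_if split: if_splits)
qed

lemma g_s2: "g s2 = 1"
proof -
  have "0 * f s2 + (-1) * g s2 \<le> 0 * f b + (-1) * g b"
    by (rule Kcomb) (use s_bounds right_neg in \<open>auto intro: less_imp_le\<close>)
  hence "g b \<le> g s2" by simp
  thus ?thesis using s2C gb by (auto simp: C_def abs_if split: if_splits)
qed


lemma g_one_mid:
  assumes gm: "\<And>t. t \<in> {a..b} \<Longrightarrow> g t > -1" and t: "t \<in> {s1..s2}"
  shows "g t = 1"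
proof (rule ccontr)
  assume gt: "g t \<noteq> 1"
  have tab: "t \<in> {a..b}" using t s_bounds by auto
  have gt1: "\<bar>g t\<bar> < 1" using gle[OF tab] gm[OF tab] gt by (auto simp: abs_if)
  hence tC: "t \<notin> C" by (auto simp: C_def)
  have st: "s1 < t" "t < s2" using t tC s1C s2C by (auto simp: less_le)
  define L where "L = C \<inter> {..t}"
  define R where "R = C \<inter> {t..}"
  have Lcl: "closed L" "closed R" unfolding L_def R_def using C_closed by auto
  have Lne: "L \<noteq> {}" "R \<noteq> {}" using s1C s2C st unfolding L_def R_def by auto
  define c where "c = Sup L"
  define d where "d = Inf R"
  have cL: "c \<in> L" unfolding c_def
    by (rule closed_contains_Sup) (use Lcl Lne in \<open>auto simp: L_def bdd_above_def\<close>)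
  have dR: "d \<in> R" unfolding d_def
    by (rule closed_contains_Inf) (use Lcl Lne in \<open>auto simp: R_def bdd_below_def\<close>)
  have cle: "x \<le> c" if "x \<in> L" for x unfolding c_def
    by (rule cSup_upper) (use that in \<open>auto simp: L_def bdd_above_def\<close>)
  have dge: "d \<le> x" if "x \<in> R" for x unfolding d_def
    by (rule cInf_lower) (use that in \<open>auto simp: R_def bdd_below_def\<close>)
  have cd: "c < t" "t < d" using cL dR tC by (auto simp: L_def R_def less_le)
  have cab: "a \<le> c" "d \<le> b" using cL dR by (auto simp: L_def R_def C_def)
  have cC: "c \<in> C" "d \<in> C" using cL dR by (auto simp: L_def R_def)
  have "g c > -1" "g d > -1" using cC gm by (auto simp: C_def)
  hence gc: "g c = 1" "g d = 1"
    using cC by (auto simp: C_def abs_if split: if_splits)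
  have inner: "\<bar>g x\<bar> < 1" if "x \<in> {c<..<d}" for x
  proof -
    have xab: "x \<in> {a..b}" using that cab by auto
    have "x \<notin> C"
    proof
      assume xC: "x \<in> C"
      show False
      proof (cases "x \<le> t")
        case True thus False using cle[of x] xC that by (auto simp: L_def)
      next
        case False thus False using dge[of x] xC that by (auto simp: R_def)
      qed
    qed
    thus ?thesis using gle[OF xab] xab by (auto simp: C_def less_le)
  qed
  have "(\<forall>x\<in>{c<..<d}. h x > 0) \<or> (\<forall>x\<in>{c<..<d}. h x < 0)"
    by (rule sign_sub) (use cab inner in auto)
  thus False
  proof
    assume hp: "\<forall>x\<in>{c<..<d}. h x > 0"
    have "0 * f c + 1 * g c \<le> 0 * f t + 1 * g t"
      by (rule Kcomb) (use cab cd hp in \<open>auto intro: less_imp_le\<close>)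
    thus False using gc gt1 by simp
  next
    assume hn: "\<forall>x\<in>{c<..<d}. h x < 0"
    have "0 * f t + (-1) * g t \<le> 0 * f d + (-1) * g d"
      by (rule Kcomb) (use cab cd hn in \<open>auto intro: less_imp_le\<close>)
    thus False using gc gt1 by simp
  qed
qed

lemma f_s12:
  assumes gm: "\<And>t. t \<in> {a..b} \<Longrightarrow> g t > -1"
  shows "f s1 = f s2"
proof -
  have h0: "h t = 0" if t: "t \<in> {s1<..<s2} - N" for t
  proof -
    have t': "t \<in> {a<..<b} - N" using t s_bounds by auto
    have "((\<lambda>_. 1::real) has_real_derivative h t) (at t)"
      by (rule has_field_derivative_transform_within_open[OF derg[OF t'], of "{s1<..<s2}"])
         (use t g_one_mid[OF gm] in auto)
    thus ?thesis using DERIV_const DERIV_unique by blast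
  qed
  have "1 * f s1 + 0 * g s1 \<le> 1 * f s2 + 0 * g s2"
    by (rule Kcomb) (use s_bounds h0 in auto)
  moreover have "(-1) * f s1 + 0 * g s1 \<le> (-1) * f s2 + 0 * g s2"
    by (rule Kcomb) (use s_bounds h0 in auto)
  ultimately show ?thesis by simp
qed

lemma GL:
  assumes gm: "\<And>t. t \<in> {a..b} \<Longrightarrow> g t > -1"
    and mb: "\<And>t. t \<in> {a<..<b} \<Longrightarrow> m \<le> \<beta> t" and Mb: "\<And>t. t \<in> {a<..<b} \<Longrightarrow> \<beta> t \<le> M"
  shows "m * (1 - g a) \<le> M * (1 - g b) \<and> m * (1 - g b) \<le> M * (1 - g a)"
proof -
  have E1: "1 * f a + (-m) * g a \<le> 1 * f s1 + (-m) * g s1"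
  proof (rule Kcomb)
    fix t assume t: "t \<in> {a<..<s1} - N"
    have "(\<beta> t - m) * h t \<ge> 0"
      using mb[of t] left_pos[of t] t s_bounds by (auto intro!: mult_nonneg_nonneg)
    thus "0 \<le> 1 * (\<beta> t * h t) + - m * h t" by (simp add: algebra_simps)
  qed (use s_bounds in auto)
  have E2: "(-1) * f a + M * g a \<le> (-1) * f s1 + M * g s1"
  proof (rule Kcomb)
    fix t assume t: "t \<in> {a<..<s1} - N"
    have "(M - \<beta> t) * h t \<ge> 0"
      using Mb[of t] left_pos[of t] t s_bounds by (auto intro!: mult_nonneg_nonneg)
    thus "0 \<le> -1 * (\<beta> t * h t) + M * h t" by (simp add: algebra_simps)
  qed (use s_bounds in auto)
  have E3: "1 * f s2 + (-M) * g s2 \<le> 1 * f b + (-M) * g b"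
  proof (rule Kcomb)
    fix t assume t: "t \<in> {s2<..<b} - N"
    have "(\<beta> t - M) * h t \<ge> 0"
      using Mb[of t] right_neg[of t] t s_bounds by (auto intro!: mult_nonpos_nonpos)
    thus "0 \<le> 1 * (\<beta> t * h t) + - M * h t" by (simp add: algebra_simps)
  qed (use s_bounds in auto)
  have E4: "(-1) * f s2 + m * g s2 \<le> (-1) * f b + m * g b"
  proof (rule Kcomb)
    fix t assume t: "t \<in> {s2<..<b} - N"
    have "(m - \<beta> t) * h t \<ge> 0"
      using mb[of t] right_neg[of t] t s_bounds by (auto intro!: mult_nonpos_nonpos)
    thus "0 \<le> -1 * (\<beta> t * h t) + m * h t" by (simp add: algebra_simps)
  qed (use s_bounds in auto)
  have "f s1 = f s2" by (rule f_s12[OF gm])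
  with E1 E2 E3 E4 g_s1 g_s2 fa fb show ?thesis by (simp add: algebra_simps)
qed

lemma GL0: "\<exists>s\<in>{a<..<b}. g s = 1"
  using g_s1 s_bounds by auto

end

lemma consec_inc:
  fixes S :: "real set"
  assumes bdd: "bdd_above S"
  and iso: "\<And>z. z \<in> S \<Longrightarrow> \<exists>r>0. \<forall>w\<in>S. \<bar>w - z\<bar> < r \<longrightarrow> w = z"
  and clo: "\<And>y w. y \<in> S \<Longrightarrow> w \<in> S \<Longrightarrow> closed (S \<inter> {y..w})"
  and z0: "z0 \<in> S" and inf: "infinite (S \<inter> {z0<..})"
  shows "\<exists>zs. (\<forall>n. zs n < zs (Suc n)) \<and> (\<forall>n. zs n \<in> S) \<and>
    (\<forall>n. \<forall>t\<in>S. \<not> (zs n < t \<and> t < zs (Suc n))) \<and> convergent zs"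
proof -
  define P where "P y \<longleftrightarrow> y \<in> S \<and> infinite (S \<inter> {y<..})" for y
  define nxt where "nxt y = Inf (S \<inter> {y<..})" for y
  have step: "P (nxt y) \<and> y < nxt y \<and> (\<forall>t\<in>S. \<not> (y < t \<and> t < nxt y))" if Py: "P y" for y
  proof -
    define T where "T = S \<inter> {y<..}"
    have Tinf: "infinite T" using Py by (simp add: P_def T_def)
    then obtain w where wT: "w \<in> T" by (metis ex_in_conv finite.emptyI)
    obtain r where r: "r > 0" "\<And>w. w \<in> S \<Longrightarrow> \<bar>w - y\<bar> < r \<Longrightarrow> w = y"
      using iso[of y] Py by (auto simp: P_def)
    have Tge: "y + r \<le> x" if "x \<in> T" for x
    proof (rule ccontr)
      assume "\<not> y + r \<le> x"
      hence "\<bar>x - y\<bar> < r" using that by (auto simp: T_def)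
      hence "x = y" using r that by (auto simp: T_def)
      thus False using that by (auto simp: T_def)
    qed
    define Q where "Q = S \<inter> {y..w} \<inter> {y+r..w}"
    have "closed (S \<inter> {y..w})" using clo[of y w] Py wT by (auto simp: P_def T_def)
    hence Qcl: "closed Q" unfolding Q_def by (rule closed_Int[OF _ closed_atLeastAtMost])
    have wQ: "w \<in> Q" using wT Tge[OF wT] by (auto simp: Q_def T_def)
    define q where "q = Inf Q"
    have qQ: "q \<in> Q" unfolding q_def
      by (rule closed_contains_Inf) (use Qcl wQ in \<open>auto simp: Q_def bdd_below_def\<close>)
    have qle: "q \<le> x" if "x \<in> Q" for x unfolding q_def
      by (rule cInf_lower) (use that in \<open>auto simp: Q_def bdd_below_def\<close>)
    have qT: "q \<in> T" using qQ r by (auto simp: Q_def T_def)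
    have qlow: "q \<le> x" if "x \<in> T" for x
    proof (cases "x \<le> w")
      case True thus ?thesis using qle[of x] that Tge[OF that] by (auto simp: Q_def T_def)
    next
      case False thus ?thesis using qQ by (auto simp: Q_def)
    qed
    have nq: "nxt y = q" unfolding nxt_def T_def[symmetric]
      by (rule cInf_eq_minimum[OF qT qlow])
    have yq: "y < q" using qT by (auto simp: T_def)
    have between: "\<forall>t\<in>S. \<not> (y < t \<and> t < nxt y)"
      using qlow nq by (force simp: T_def)
    have "T - {q} \<subseteq> S \<inter> {q<..}" using qlow qT by (force simp: T_def)
    moreover have "infinite (T - {q})" using Tinf by simp
    ultimately have "infinite (S \<inter> {q<..})" using finite_subset by blast
    thus ?thesis using qT nq yq between by (auto simp: P_def T_def)
  qed
  define zs where "zs = rec_nat z0 (\<lambda>_ y. nxt y)"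
  have zs0: "zs 0 = z0" and zsS: "zs (Suc n) = nxt (zs n)" for n by (simp_all add: zs_def)
  have Pn: "P (zs n)" for n
    by (induction n) (use z0 inf step in \<open>auto simp: P_def zs0 zsS\<close>)
  have inc: "zs n < zs (Suc n)" for n using step[OF Pn[of n]] zsS by simp
  have inS: "zs n \<in> S" for n using Pn[of n] by (simp add: P_def)
  have btw: "\<forall>t\<in>S. \<not> (zs n < t \<and> t < zs (Suc n))" for n using step[OF Pn[of n]] zsS by simp
  have "incseq zs" using inc by (intro incseq_SucI less_imp_le)
  moreover have "bdd_above (range zs)"
    using bdd inS by (auto simp: bdd_above_def)
  ultimately have "convergent zs"
    using LIMSEQ_incseq_SUP convergentI by blast
  thus ?thesis using inc inS btw by blast
qed

lemma consec_dec:
  fixes S :: "real set"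
  assumes bdd: "bdd_below S"
  and iso: "\<And>z. z \<in> S \<Longrightarrow> \<exists>r>0. \<forall>w\<in>S. \<bar>w - z\<bar> < r \<longrightarrow> w = z"
  and clo: "\<And>y w. y \<in> S \<Longrightarrow> w \<in> S \<Longrightarrow> closed (S \<inter> {y..w})"
  and z0: "z0 \<in> S" and inf: "infinite (S \<inter> {..<z0})"
  shows "\<exists>zs. (\<forall>n. zs (Suc n) < zs n) \<and> (\<forall>n. zs n \<in> S) \<and>
    (\<forall>n. \<forall>t\<in>S. \<not> (zs (Suc n) < t \<and> t < zs n)) \<and> convergent zs"
proof -
  let ?S = "uminus ` S"
  have "\<exists>zs. (\<forall>n. zs n < zs (Suc n)) \<and> (\<forall>n. zs n \<in> ?S) \<and>
    (\<forall>n. \<forall>t\<in>?S. \<not> (zs n < t \<and> t < zs (Suc n))) \<and> convergent zs"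
  proof (rule consec_inc)
    show "bdd_above ?S" using bdd by (simp add: bdd_above_uminus)
    show "\<exists>r>0. \<forall>w\<in>?S. \<bar>w - z\<bar> < r \<longrightarrow> w = z" if "z \<in> ?S" for z
    proof -
      have "-z \<in> S" using that by force
      then obtain r where "r > 0" "\<forall>w\<in>S. \<bar>w - (-z)\<bar> < r \<longrightarrow> w = -z"
        using iso[of "-z"] by blast
      thus ?thesis by (intro exI[of _ r]) (auto simp: abs_minus_commute)
    qed
    show "closed (?S \<inter> {y..w})" if "y \<in> ?S" "w \<in> ?S" for y w
    proof -
      have "?S \<inter> {y..w} = uminus ` (S \<inter> {-w..-y})" by (force simp: image_iff)
      moreover have "closed (S \<inter> {-w..-y})"
        using clo[of "-w" "-y"] that by auto
      ultimately show ?thesis using closed_negations by metis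
    qed
    show "-z0 \<in> ?S" using z0 by auto
    have "?S \<inter> {-z0<..} = uminus ` (S \<inter> {..<z0})" by (force simp: image_iff)
    moreover have "infinite (uminus ` (S \<inter> {..<z0}))"
      using inf finite_imageD[of uminus "S \<inter> {..<z0}"] by auto
    ultimately show "infinite (?S \<inter> {-z0<..})" by simp
  qed
  then obtain zs where zs: "\<forall>n. zs n < zs (Suc n)" "\<forall>n. zs n \<in> ?S"
    "\<forall>n. \<forall>t\<in>?S. \<not> (zs n < t \<and> t < zs (Suc n))" "convergent zs" by blast
  show ?thesis
  proof (intro exI[of _ "\<lambda>n. - zs n"] conjI allI ballI)
    fix n show "- zs (Suc n) < - zs n" using zs(1) by simp
    show "- zs n \<in> S" using zs(2)[rule_format, of n] by (metis (no_types) add.inverse_inverse imageE)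
    fix t assume "t \<in> S"
    hence "-t \<in> ?S" by simp
    hence "\<not> (zs n < -t \<and> -t < zs (Suc n))" using zs(3) by blast
    thus "\<not> (- zs (Suc n) < t \<and> t < - zs n)" by linarith
  next
    show "convergent (\<lambda>n. - zs n)" using zs(4) convergent_minus_iff by blast
  qed
qed

lemma consec:
  fixes S :: "real set"
  assumes bdd: "bdd_above S" "bdd_below S"
  and iso: "\<And>z. z \<in> S \<Longrightarrow> \<exists>r>0. \<forall>w\<in>S. \<bar>w - z\<bar> < r \<longrightarrow> w = z"
  and clo: "\<And>y w. y \<in> S \<Longrightarrow> w \<in> S \<Longrightarrow> closed (S \<inter> {y..w})"
  and inf: "infinite S"
  shows "\<exists>zs. ((\<forall>n. zs n < zs (Suc n)) \<or> (\<forall>n. zs (Suc n) < zs n)) \<and> (\<forall>n. zs n \<in> S) \<and>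
    (\<forall>n. \<forall>t\<in>S. \<not> (min (zs n) (zs (Suc n)) < t \<and> t < max (zs n) (zs (Suc n)))) \<and> convergent zs"
proof (cases "\<exists>z0\<in>S. infinite (S \<inter> {z0<..})")
  case True
  then obtain z0 where "z0 \<in> S" "infinite (S \<inter> {z0<..})" by blast
  have ba: "bdd_above S" using bdd by blast
  obtain zs where
    zs: "\<forall>n. zs n < zs (Suc n)" "\<forall>n. zs n \<in> S" "\<forall>n. \<forall>t\<in>S. \<not> (zs n < t \<and> t < zs (Suc n))" "convergent zs"
  proof -
    have "\<exists>zs. (\<forall>n. zs n < zs (Suc n)) \<and> (\<forall>n. zs n \<in> S) \<and>
      (\<forall>n. \<forall>t\<in>S. \<not> (zs n < t \<and> t < zs (Suc n))) \<and> convergent zs"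
      by (rule consec_inc[of S z0]) (use ba iso clo \<open>z0 \<in> S\<close> \<open>infinite (S \<inter> {z0<..})\<close> in blast)+
    thus ?thesis using that by blast
  qed
  have mm: "min (zs n) (zs (Suc n)) = zs n" "max (zs n) (zs (Suc n)) = zs (Suc n)" for n
    using zs(1)[rule_format, of n] by auto
  show ?thesis
  proof (intro exI[of _ zs] conjI)
    show "(\<forall>n. zs n < zs (Suc n)) \<or> (\<forall>n. zs (Suc n) < zs n)" using zs(1) by blast
    show "\<forall>n. zs n \<in> S" by (rule zs(2))
    show "\<forall>n. \<forall>t\<in>S. \<not> (min (zs n) (zs (Suc n)) < t \<and> t < max (zs n) (zs (Suc n)))"
      unfolding mm by (rule zs(3))
    show "convergent zs" by (rule zs(4))
  qed
next
  case False
  obtain z0 where z0: "z0 \<in> S" using inf by (metis ex_in_conv finite.emptyI)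
  have "S \<subseteq> (S \<inter> {z0<..}) \<union> {z0} \<union> (S \<inter> {..<z0})" by auto
  moreover have "finite (S \<inter> {z0<..})" using False z0 by blast
  ultimately have "infinite (S \<inter> {..<z0})" using inf by (meson finite_Un finite_insert finite.emptyI finite_subset)
  note inf2 = this
  have bb: "bdd_below S" using bdd by blast
  obtain zs where
    zs: "\<forall>n. zs (Suc n) < zs n" "\<forall>n. zs n \<in> S" "\<forall>n. \<forall>t\<in>S. \<not> (zs (Suc n) < t \<and> t < zs n)" "convergent zs"
  proof -
    have "\<exists>zs. (\<forall>n. zs (Suc n) < zs n) \<and> (\<forall>n. zs n \<in> S) \<and>
      (\<forall>n. \<forall>t\<in>S. \<not> (zs (Suc n) < t \<and> t < zs n)) \<and> convergent zs"
      by (rule consec_dec[of S z0]) (use bb iso clo z0 inf2 in blast)+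
    thus ?thesis using that by blast
  qed
  have mm: "min (zs n) (zs (Suc n)) = zs (Suc n)" "max (zs n) (zs (Suc n)) = zs n" for n
    using zs(1)[rule_format, of n] by auto
  show ?thesis
  proof (intro exI[of _ zs] conjI)
    show "(\<forall>n. zs n < zs (Suc n)) \<or> (\<forall>n. zs (Suc n) < zs n)" using zs(1) by blast
    show "\<forall>n. zs n \<in> S" by (rule zs(2))
    show "\<forall>n. \<forall>t\<in>S. \<not> (min (zs n) (zs (Suc n)) < t \<and> t < max (zs n) (zs (Suc n)))"
      unfolding mm by (rule zs(3))
    show "convergent zs" by (rule zs(4))
  qed
qed

lemma sum_reflect_lt: "(\<Sum>n<K. F (K - Suc n)) = (\<Sum>n<(K::nat). (F n :: real))"
  by (rule sum.reindex_bij_witness[where i="\<lambda>n. K - Suc n" and j="\<lambda>n. K - Suc n"]) auto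

lemma bv_chain:
  fixes \<beta> :: "real \<Rightarrow> real" and c :: "nat \<Rightarrow> real"
  assumes B: "\<forall>xs. sorted xs \<and> set xs \<subseteq> S \<longrightarrow>
        (\<Sum>i<length xs - 1. \<bar>\<beta> (xs ! Suc i) - \<beta> (xs ! i)\<bar>) \<le> B"
    and mono: "\<And>i. c i \<le> c (Suc i)" and inS: "\<And>i. c i \<in> S"
  shows "(\<Sum>i<M. \<bar>\<beta> (c (Suc i)) - \<beta> (c i)\<bar>) \<le> B"
proof -
  define xs where "xs = map c [0..<Suc M]"
  have mc: "mono c" using mono by (rule incseq_SucI)
  have "sorted xs" unfolding xs_def sorted_iff_nth_mono
    by (auto simp del: upt_Suc intro!: monoD[OF mc])
  moreover have "set xs \<subseteq> S" using inS by (auto simp: xs_def)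
  ultimately have "(\<Sum>i<length xs - 1. \<bar>\<beta> (xs ! Suc i) - \<beta> (xs ! i)\<bar>) \<le> B" using B by blast
  moreover have "(\<Sum>i<length xs - 1. \<bar>\<beta> (xs ! Suc i) - \<beta> (xs ! i)\<bar>) = (\<Sum>i<M. \<bar>\<beta> (c (Suc i)) - \<beta> (c i)\<bar>)"
    unfolding xs_def by (intro sum.cong) (auto simp: nth_append simp del: upt_Suc)
  ultimately show ?thesis by simp
qed

lemma bv_pairs:
  fixes \<beta> :: "real \<Rightarrow> real" and lo hi :: "nat \<Rightarrow> real"
  assumes B: "\<forall>xs. sorted xs \<and> set xs \<subseteq> S \<longrightarrow>
        (\<Sum>i<length xs - 1. \<bar>\<beta> (xs ! Suc i) - \<beta> (xs ! i)\<bar>) \<le> B"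
    and lh: "\<And>n. n < K \<Longrightarrow> lo n \<le> hi n"
    and hl: "\<And>n. Suc n < K \<Longrightarrow> hi n \<le> lo (Suc n)"
    and inS: "\<And>n. n < K \<Longrightarrow> lo n \<in> S \<and> hi n \<in> S"
  shows "(\<Sum>n<K. \<bar>\<beta> (hi n) - \<beta> (lo n)\<bar>) \<le> B"
proof (cases "K = 0")
  case True
  have "(0::real) \<le> B" using B[rule_format, of "[]"] by simp
  thus ?thesis using True by simp
next
  case False
  define c where "c i = (if i < 2*K then (if even i then lo (i div 2) else hi (i div 2)) else hi (K - 1))" for i
  have mono: "c i \<le> c (Suc i)" for i
  proof (cases "Suc i < 2*K")
    case True
    show ?thesis
    proof (cases "even i")
      case True
      hence "Suc i div 2 = i div 2" by presburger
      thus ?thesis using True \<open>Suc i < 2*K\<close> lh[of "i div 2"] by (auto simp: c_def)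
    next
      case False
      hence "Suc i div 2 = Suc (i div 2)" by presburger
      moreover have "Suc (i div 2) < K" using False \<open>Suc i < 2*K\<close> by presburger
      ultimately show ?thesis using False \<open>Suc i < 2*K\<close> hl[of "i div 2"] by (auto simp: c_def)
    qed
  next
    case F: False
    show ?thesis
    proof (cases "Suc i = 2*K")
      case True
      hence "odd i" "i div 2 = K - 1" by presburger+
      thus ?thesis using True by (auto simp: c_def)
    next
      case False thus ?thesis using F by (auto simp: c_def)
    qed
  qed
  have cS: "c i \<in> S" for i
  proof -
    have "i div 2 < K" if "i < 2*K" using that by linarith
    thus ?thesis using inS[of "i div 2"] inS[of "K-1"] False by (auto simp: c_def)
  qed
  define F where "F i = \<bar>\<beta> (c (Suc i)) - \<beta> (c i)\<bar>" for i
  have "(\<Sum>n<K. \<bar>\<beta> (hi n) - \<beta> (lo n)\<bar>) = (\<Sum>n<K. F (n*2))"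
  proof (intro sum.cong refl)
    fix n assume "n \<in> {..<K}"
    hence "n * 2 < 2*K" "Suc (n*2) < 2*K" "even (n*2)" "odd (Suc (n*2))" "n*2 div 2 = n" "Suc (n*2) div 2 = n"
      by auto
    thus "\<bar>\<beta> (hi n) - \<beta> (lo n)\<bar> = F (n*2)" by (simp add: F_def c_def)
  qed
  also have "\<dots> \<le> (\<Sum>n<K. sum F {n*2..<n*2+2})"
    by (intro sum_mono) (auto simp: F_def numeral_2_eq_2)
  also have "\<dots> = sum F {..<K*2}" by (rule sum.nat_group)
  also have "\<dots> \<le> B" unfolding F_def by (rule bv_chain[of S \<beta> B c, OF B mono cS])
  finally show ?thesis .
qed

lemma amplitude:
  fixes x m M :: "nat \<Rightarrow> real"
  assumes rec: "\<And>n. n \<ge> N0 \<Longrightarrow> m n * x n \<le> M n * x (Suc n)"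
    and m0: "m0 > 0" "\<And>n. m0 \<le> m n" "\<And>n. m n \<le> M n"
    and sd: "summable (\<lambda>n. M n - m n)"
    and xpos: "\<And>n. x n > 0" and x0: "x \<longlonglongrightarrow> 0"
  shows False
proof -
  define d where "d n = M n - m n" for n
  have d0: "d n \<ge> 0" for n using m0(3)[of n] by (simp add: d_def)
  have dd: "d = (\<lambda>n. M n - m n)" by (simp add: d_def fun_eq_iff)
  have sd': "summable d" using sd dd by simp
  obtain N where N: "\<forall>n\<ge>N. norm (\<Sum>i. d (i + n)) < m0 / 2"
    using suminf_exist_split[OF _ sd', of "m0/2"] m0 by auto
  define N1 where "N1 = max N N0"
  have tail: "(\<Sum>i. d (i + N1)) < m0 / 2" using N[rule_format, of N1] by (simp add: N1_def)
  have summ: "summable (\<lambda>i. d (i + N1))" using sd' summable_ignore_initial_segment by blast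
  have part: "(\<Sum>i<j. d (N1 + i)) \<le> (\<Sum>i. d (i + N1))" for j
    using sum_le_suminf[OF summ, of "{..<j}"] d0 by (simp add: add.commute)
  define S where "S j = (\<Sum>i<j. d (N1 + i)) / m0" for j
  have S0: "0 \<le> S j" for j using d0 m0 by (auto simp: S_def intro!: sum_nonneg divide_nonneg_pos)
  have Shalf: "S j \<le> 1/2" for j
  proof -
    have "(\<Sum>i<j. d (N1 + i)) \<le> m0 / 2" using part[of j] tail by linarith
    thus ?thesis using m0 by (simp add: S_def field_simps)
  qed
  have low: "x (N1 + j) \<ge> x N1 * (1 - S j)" for j
  proof (induction j)
    case 0 thus ?case by (simp add: S_def)
  next
    case (Suc j)
    define n where "n = N1 + j"
    define c where "c = d n / m0"
    have c0: "c \<ge> 0" using d0 m0 by (simp add: c_def)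
    have SS: "S (Suc j) = S j + c" by (simp add: S_def c_def n_def add_divide_distrib)
    have Mpos: "M n > 0" using m0(1) m0(2)[of n] m0(3)[of n] by linarith
    have "m n * x n \<le> M n * x (Suc n)" using rec[of n] by (simp add: n_def N1_def)
    hence "x (Suc n) \<ge> (m n / M n) * x n" using Mpos by (simp add: field_simps)
    moreover have "m n / M n = 1 - d n / M n" using Mpos by (simp add: d_def field_simps)
    moreover have "d n / M n \<le> c"
      unfolding c_def using d0[of n] m0(1) m0(2)[of n] m0(3)[of n]
      by (intro divide_left_mono) auto
    ultimately have "x (Suc n) \<ge> (1 - c) * x n"
      using xpos[of n] by (smt (verit) mult_right_mono)
    moreover have "x n \<ge> x N1 * (1 - S j)" using Suc by (simp add: n_def)
    moreover have "1 - c \<ge> 0" using Shalf[of "Suc j"] S0[of j] SS by linarith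
    ultimately have "x (Suc n) \<ge> (1 - c) * (x N1 * (1 - S j))"
      by (smt (verit) mult_left_mono)
    moreover have "(1 - c) * (x N1 * (1 - S j)) \<ge> x N1 * (1 - S (Suc j))"
    proof -
      have "(1 - c) * (1 - S j) \<ge> 1 - S (Suc j)" using SS c0 S0[of j] by (simp add: algebra_simps)
      thus ?thesis using xpos[of N1] by (smt (verit) mult_left_mono mult.commute mult.assoc)
    qed
    ultimately show ?case by (simp add: n_def)
  qed
  have half: "x (N1 + j) \<ge> x N1 / 2" for j
  proof -
    have "x N1 * (1/2) \<le> x N1 * (1 - S j)" using Shalf[of j] xpos[of N1] by (intro mult_left_mono) auto
    thus ?thesis using low[of j] by simp
  qed
  obtain n0 where "\<forall>n\<ge>n0. norm (x n) < x N1 / 2"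
    using LIMSEQ_D[OF x0, of "x N1 / 2"] xpos[of N1] by auto
  hence "norm (x (N1 + n0)) < x N1 / 2" by simp
  hence "x (N1 + n0) < x N1 / 2" by simp
  thus False using half[of n0] by simp
qed

lemma pointwise:
  fixes tau u :: "real \<Rightarrow> 'a::euclidean_space" and D U' lam :: 'a
  assumes kpos: "k > 0" and t: "t \<in> {0<..<L}" and ut: "u t \<noteq> 0"
    and dtau: "(tau has_vector_derivative D) (at t)"
    and du: "(u has_vector_derivative U') (at t)"
    and sph: "\<forall>s\<in>{0..L}. norm (tau s) = 1"
    and e1: "U' + (u t \<bullet> D) *\<^sub>R tau t = b *\<^sub>R (lam - (lam \<bullet> tau t) *\<^sub>R tau t)"
    and e2: "norm (u t) *\<^sub>R D = k *\<^sub>R u t"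
  shows "D = (k / norm (u t)) *\<^sub>R u t"
    and "tau t \<bullet> D = 0"
    and "((\<lambda>s. lam \<bullet> tau s) has_real_derivative lam \<bullet> D) (at t)"
    and "((\<lambda>s. k * norm (u s)) has_real_derivative b * (lam \<bullet> D)) (at t)"
proof -
  have nu: "norm (u t) > 0" using ut by simp
  show DT: "D = (k / norm (u t)) *\<^sub>R u t"
  proof -
    have "D = (1 / norm (u t)) *\<^sub>R (norm (u t) *\<^sub>R D)" using nu by simp
    also have "\<dots> = (k / norm (u t)) *\<^sub>R u t" using e2 by simp
    finally show ?thesis .
  qed
  show tD: "tau t \<bullet> D = 0"
  proof -
    have d1: "(tau has_derivative (\<lambda>h. h *\<^sub>R D)) (at t)" using dtau by (simp add: has_vector_derivative_def)
    have "((\<lambda>s. tau s \<bullet> tau s) has_derivative (\<lambda>h. tau t \<bullet> (h *\<^sub>R D) + (h *\<^sub>R D) \<bullet> tau t)) (at t)"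
      by (rule has_derivative_inner[OF d1 d1])
    moreover have "((\<lambda>s. tau s \<bullet> tau s) has_derivative (\<lambda>h. 0)) (at t)"
    proof (rule has_derivative_transform_within_open[of "\<lambda>s. 1"])
      show "((\<lambda>s. 1::real) has_derivative (\<lambda>h. 0)) (at t)" by simp
      show "open {0<..<L}" by simp
      show "t \<in> {0<..<L}" by (rule t)
      fix s assume "s \<in> {0<..<L}"
      hence "norm (tau s) = 1" using sph by auto
      thus "1 = tau s \<bullet> tau s" by (simp add: dot_square_norm)
    qed
    ultimately have "(\<lambda>h. tau t \<bullet> (h *\<^sub>R D) + (h *\<^sub>R D) \<bullet> tau t) = (\<lambda>h. 0)"
      using has_derivative_unique by blast
    hence "tau t \<bullet> (1 *\<^sub>R D) + (1 *\<^sub>R D) \<bullet> tau t = 0" by metis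
    thus ?thesis by (simp add: inner_commute)
  qed
  show "((\<lambda>s. lam \<bullet> tau s) has_real_derivative lam \<bullet> D) (at t)"
    unfolding has_real_derivative_iff_has_vector_derivative
    by (rule bounded_linear.has_vector_derivative[OF bounded_linear_inner_right dtau])
  show "((\<lambda>s. k * norm (u s)) has_real_derivative b * (lam \<bullet> D)) (at t)"
  proof -
    have d1: "(u has_derivative (\<lambda>h. h *\<^sub>R U')) (at t)" using du by (simp add: has_vector_derivative_def)
    have "((\<lambda>s. norm (u s)) has_derivative (\<lambda>h. (h *\<^sub>R U') \<bullet> sgn (u t))) (at t)"
      using has_derivative_compose[OF d1 has_derivative_norm[OF ut]] by (simp add: o_def)
    hence "((\<lambda>s. norm (u s)) has_real_derivative U' \<bullet> sgn (u t)) (at t)"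
      by (simp add: has_field_derivative_def mult_commute_abs)
    hence d2: "((\<lambda>s. k * norm (u s)) has_real_derivative k * (U' \<bullet> sgn (u t))) (at t)"
      by (rule DERIV_cmult)
    have tu: "tau t \<bullet> u t = 0"
    proof -
      have "tau t \<bullet> u t = (norm (u t) / k) * (tau t \<bullet> D)" using DT kpos nu by simp
      thus ?thesis using tD by simp
    qed
    have U: "U' = b *\<^sub>R (lam - (lam \<bullet> tau t) *\<^sub>R tau t) - (u t \<bullet> D) *\<^sub>R tau t"
      using e1 by (simp add: algebra_simps)
    have ut0: "u t \<bullet> tau t = 0" using tu by (simp add: inner_commute)
    have "U' \<bullet> u t = b * (lam \<bullet> u t)"
      by (simp add: U inner_diff_left tu ut0)
    hence "U' \<bullet> sgn (u t) = b * (lam \<bullet> sgn (u t))"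
      by (simp add: sgn_div_norm)
    hence "k * (U' \<bullet> sgn (u t)) = b * (lam \<bullet> D)"
      using DT by (simp add: sgn_div_norm divide_inverse)
    thus ?thesis using d2 by simp
  qed
qed

lemma dep_identity:
  fixes tau T lam :: "'a::euclidean_space"
  assumes n1: "norm tau = 1" and o: "tau \<bullet> T = 0" and nT: "norm T = k" and kpos: "k > 0"
    and abc: "(a, b, c) \<noteq> (0, 0, 0)" and lin: "a *\<^sub>R tau + b *\<^sub>R T + c *\<^sub>R lam = 0"
  shows "lam = (lam \<bullet> tau) *\<^sub>R tau + ((lam \<bullet> T) / k\<^sup>2) *\<^sub>R T"
proof -
  have tt: "tau \<bullet> tau = 1" using n1 by (simp add: dot_square_norm)
  have TT: "T \<bullet> T = k\<^sup>2" using nT by (simp add: dot_square_norm)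
  have c0: "c \<noteq> 0"
  proof
    assume c: "c = 0"
    have "tau \<bullet> (a *\<^sub>R tau + b *\<^sub>R T + c *\<^sub>R lam) = 0" using lin by simp
    hence a: "a = 0" using c tt o by (simp add: inner_add_right)
    have "T \<bullet> (a *\<^sub>R tau + b *\<^sub>R T + c *\<^sub>R lam) = 0" using lin by simp
    hence "b * k\<^sup>2 = 0" using c a TT by (simp add: inner_add_right)
    hence "b = 0" using kpos by simp
    thus False using a c abc by simp
  qed
  have L: "lam = (- a / c) *\<^sub>R tau + (- b / c) *\<^sub>R T"
  proof -
    have "c *\<^sub>R lam = - a *\<^sub>R tau - b *\<^sub>R T" using lin by (simp add: algebra_simps eq_neg_iff_add_eq_0)
    hence "lam = (1/c) *\<^sub>R (- a *\<^sub>R tau - b *\<^sub>R T)" using c0 by (metis scaleR_scaleR divide_self_if scaleR_one mult.commute times_divide_eq_left)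
    thus ?thesis using c0 by (simp add: algebra_simps scaleR_diff_right divide_inverse)
  qed
  have o': "T \<bullet> tau = 0" using o by (simp add: inner_commute)
  have l1: "lam \<bullet> tau = - a / c" by (subst L) (simp add: inner_add_left inner_diff_left tt o o')
  have l2: "lam \<bullet> T = (- b / c) * k\<^sup>2"
  proof -
    have "lam \<bullet> T = (- a / c) * (tau \<bullet> T) + (- b / c) * (T \<bullet> T)"
      by (subst L) (simp only: inner_add_left inner_scaleR_left)
    thus ?thesis using o TT by simp
  qed
  show ?thesis using kpos by (subst L) (simp add: l1 l2 L[symmetric])
qed


lemma ae_cont_eq:
  fixes F G :: "real \<Rightarrow> 'a::real_normed_vector"
  assumes W: "open W" and N: "negligible N" and cF: "continuous_on W F" and cG: "continuous_on W G"
    and eq: "\<And>t. t \<in> W - N \<Longrightarrow> F t = G t" and t: "t \<in> W"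
  shows "F t = G t"
proof (rule ccontr)
  assume ne: "F t \<noteq> G t"
  define V where "V = (\<lambda>s. F s - G s) -` (- {0}) \<inter> W"
  have "continuous_on W (\<lambda>s. F s - G s)" using cF cG by (intro continuous_intros)
  hence "open V" unfolding V_def using W continuous_on_open_vimage by blast
  moreover have "V \<noteq> {}" using ne t by (auto simp: V_def)
  moreover have "V \<subseteq> N" using eq by (auto simp: V_def)
  ultimately show False using open_not_negligible negligible_subset N by blast
qed

theorem mainTheorem17:
  fixes L :: real and beta :: "real \<Rightarrow> real" and k :: real
    and tau tau' u u' :: "real \<Rightarrow> 'a::euclidean_space" and lam :: 'a
  assumes dim: "DIM('a) \<ge> 2"
    and L: "L > 0"
    and beta_pos: "\<forall>t\<in>{0..L}. beta t > 0"
    and beta_bv: "bounded_variation_on {0..L} beta"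
    and beta_inv_bdd: "\<exists>B. \<forall>t\<in>{0..L}. 1 / beta t \<le> B"
    and tau_lip: "\<exists>C. C-lipschitz_on {0..L} tau"
    and tau_sphere: "\<forall>t\<in>{0..L}. norm (tau t) = 1"
    and tau_deriv: "AE t in lebesgue_on {0<..<L}. (tau has_vector_derivative tau' t) (at t)"
    and k_def: "esssup (lebesgue_on {0<..<L}) (\<lambda>t. ereal (norm (tau' t))) = ereal k"
    and k_pos: "k > 0"
    and lam: "norm lam = 1"
    and u_lip: "\<exists>C. C-lipschitz_on {0..L} u"
    and u_deriv: "AE t in lebesgue_on {0<..<L}. (u has_vector_derivative u' t) (at t)"
    and u_nonzero: "\<exists>t\<in>{0..L}. u t \<noteq> 0"
    and eq1: "AE t in lebesgue_on {0<..<L}.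
               u' t + (u t \<bullet> tau' t) *\<^sub>R tau t = beta t *\<^sub>R (lam - (lam \<bullet> tau t) *\<^sub>R tau t)"
    and eq2: "AE t in lebesgue_on {0<..<L}. norm (u t) *\<^sub>R tau' t = k *\<^sub>R u t"
    and dep: "\<forall>t\<in>{0..L}. k * norm (u t) > 0 \<longrightarrow>
               (\<forall>d. (tau has_vector_derivative d) (at t within {0..L}) \<longrightarrow>
                  (\<exists>a b c. (a, b, c) \<noteq> (0, 0, 0) \<and> a *\<^sub>R tau t + b *\<^sub>R d + c *\<^sub>R lam = 0))"
    and I: "I \<in> components ({t\<in>{0..L}. tau t \<noteq> lam \<and> tau t \<noteq> - lam} \<union> {t\<in>{0..L}. k * norm (u t) > 0})"
  shows "finite (I - {t\<in>{0..L}. k * norm (u t) > 0})"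
proof -
  obtain Ct where Ct: "Ct-lipschitz_on {0..L} tau" using tau_lip by blast
  obtain Cu where Cu: "Cu-lipschitz_on {0..L} u" using u_lip by blast
  have ctau: "continuous_on {0..L} tau" using Ct lipschitz_on_continuous_on by blast
  have cu: "continuous_on {0..L} u" using Cu lipschitz_on_continuous_on by blast
  define OM where "OM = {t\<in>{0..L}. k * norm (u t) > 0}"
  define A where "A = {t\<in>{0..L}. tau t \<noteq> lam \<and> tau t \<noteq> - lam}"
  define Z where "Z = I - OM"
  define f where "f t = k * norm (u t)" for t
  define g where "g t = lam \<bullet> tau t" for t
  define T where "T t = (k / norm (u t)) *\<^sub>R u t" for t
  define h where "h t = lam \<bullet> T t" for t
  have OM_iff: "t \<in> OM \<longleftrightarrow> t \<in> {0..L} \<and> u t \<noteq> 0" for t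
    using k_pos by (auto simp: OM_def)
  have Ic: "I \<noteq> {}" "I \<subseteq> A \<union> OM" "connected I"
    "\<And>D. D \<noteq> {} \<Longrightarrow> I \<subseteq> D \<Longrightarrow> D \<subseteq> A \<union> OM \<Longrightarrow> connected D \<Longrightarrow> D = I"
    using I unfolding in_components_maximal A_def OM_def by blast+
  have Iint: "is_interval I" using Ic(3) is_interval_connected_1 by blast
  have betw: "t \<in> I" if "y \<in> I" "w \<in> I" "y \<le> t" "t \<le> w" for y w t
    using mem_is_interval_1_I[OF Iint that] .
  have I01: "I \<subseteq> {0..L}" using Ic(2) by (auto simp: A_def OM_def)
  have Zsub: "Z \<subseteq> {0..L}" using I01 by (auto simp: Z_def)
  have ZI: "Z \<subseteq> I" by (auto simp: Z_def)
  have Zu: "u z = 0" if "z \<in> Z" for z using that I01 OM_iff by (auto simp: Z_def)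
  have ZA: "z \<in> A" if "z \<in> Z" for z using that Ic(2) by (auto simp: Z_def)
  have lam1: "lam \<bullet> lam = 1" using lam by (simp add: dot_square_norm)
  have gle: "\<bar>g t\<bar> \<le> 1" if "t \<in> {0..L}" for t
    using Cauchy_Schwarz_ineq2[of lam "tau t"] lam tau_sphere that by (simp add: g_def)
  have Zg: "\<bar>g z\<bar> < 1" if "z \<in> Z" for z
  proof -
    have z: "z \<in> {0..L}" "tau z \<noteq> lam" "tau z \<noteq> - lam" using ZA[OF that] by (auto simp: A_def)
    have "\<bar>g z\<bar> \<noteq> 1"
    proof
      assume "\<bar>g z\<bar> = 1"
      hence "\<bar>lam \<bullet> tau z\<bar> = norm lam * norm (tau z)" using lam tau_sphere z by (simp add: g_def)
      hence "norm lam *\<^sub>R tau z = norm (tau z) *\<^sub>R lam \<or> norm lam *\<^sub>R tau z = - norm (tau z) *\<^sub>R lam"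
        by (simp add: norm_cauchy_schwarz_abs_eq)
      thus False using lam tau_sphere z by auto
    qed
    thus ?thesis using gle[of z] z by simp
  qed
  have IZ: "u t \<noteq> 0" if "t \<in> I" "t \<notin> Z" for t using that I01 OM_iff by (auto simp: Z_def)
  have Zclo: "Z \<inter> {y..w} = {s\<in>{y..w}. u s = 0}" if "y \<in> Z" "w \<in> Z" for y w
  proof -
    have "s \<in> I" if "s \<in> {y..w}" for s using betw[of y w s] ZI \<open>y \<in> Z\<close> \<open>w \<in> Z\<close> that by auto
    thus ?thesis using Zu IZ by auto
  qed
  have clo: "closed (Z \<inter> {y..w})" if "y \<in> Z" "w \<in> Z" for y w
  proof (cases "y \<le> w")
    case True
    have "{y..w} \<subseteq> {0..L}" using Zsub that by auto
    hence "continuous_on {y..w} u" using cu continuous_on_subset by blast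
    thus ?thesis unfolding Zclo[OF that] by (intro continuous_closed_preimage_constant) auto
  next
    case False thus ?thesis by simp
  qed

  obtain N1 where N1: "negligible N1" "\<forall>t\<in>{0<..<L}-N1. (tau has_vector_derivative tau' t) (at t)"
    using AE_negl[OF tau_deriv] by blast
  obtain N2 where N2: "negligible N2" "\<forall>t\<in>{0<..<L}-N2. (u has_vector_derivative u' t) (at t)"
    using AE_negl[OF u_deriv] by blast
  obtain N3 where N3: "negligible N3" "\<forall>t\<in>{0<..<L}-N3.
     u' t + (u t \<bullet> tau' t) *\<^sub>R tau t = beta t *\<^sub>R (lam - (lam \<bullet> tau t) *\<^sub>R tau t)"
    using AE_negl[OF eq1] by blast
  obtain N4 where N4: "negligible N4" "\<forall>t\<in>{0<..<L}-N4. norm (u t) *\<^sub>R tau' t = k *\<^sub>R u t"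
    using AE_negl[OF eq2] by blast
  define N where "N = N1 \<union> N2 \<union> N3 \<union> N4"
  have negN: "negligible N" unfolding N_def by (intro negligible_Un N1(1) N2(1) N3(1) N4(1))
  define W where "W = {t\<in>{0<..<L}. u t \<noteq> 0}"
  have cuo: "continuous_on {0<..<L} u" by (rule continuous_on_subset[OF cu]) auto
  have Wopen: "open W"
  proof -
    have oo: "open (- {0::'a})" by (rule open_Compl) simp
    have "\<forall>B. open B \<longrightarrow> open (u -` B \<inter> {0<..<L})"
      using cuo continuous_on_open_vimage[of "{0<..<L}" u] by simp
    hence "open (u -` (- {0}) \<inter> {0<..<L})" using oo by blast
    moreover have "u -` (- {0}) \<inter> {0<..<L} = W" by (auto simp: W_def)
    ultimately show ?thesis by simp
  qed
  have pw: "tau' t = T t \<and> tau t \<bullet> T t = 0 \<and> (g has_real_derivative h t) (at t) \<and>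
      (f has_real_derivative beta t * h t) (at t) \<and> lam = g t *\<^sub>R tau t + (h t / k\<^sup>2) *\<^sub>R T t"
    if tW: "t \<in> W - N" for t
  proof -
    have t: "t \<in> {0<..<L}" "u t \<noteq> 0" using tW by (auto simp: W_def)
    have tn: "t \<notin> N1" "t \<notin> N2" "t \<notin> N3" "t \<notin> N4" using tW by (auto simp: N_def)
    note dtau = N1(2)[rule_format, of t] and du = N2(2)[rule_format, of t]
      and e1 = N3(2)[rule_format, of t] and e2 = N4(2)[rule_format, of t]
    have P1: "tau' t = T t" using pointwise(1)[OF k_pos t(1) t(2) dtau du tau_sphere e1 e2] t tn
      by (simp add: T_def)
    have P2: "tau t \<bullet> T t = 0" using pointwise(2)[OF k_pos t(1) t(2) dtau du tau_sphere e1 e2] t tn P1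
      by simp
    have P3: "(g has_real_derivative h t) (at t)"
      using pointwise(3)[OF k_pos t(1) t(2) dtau du tau_sphere e1 e2] t tn P1
      unfolding g_def[abs_def] h_def by simp
    have P4: "(f has_real_derivative beta t * h t) (at t)"
      using pointwise(4)[OF k_pos t(1) t(2) dtau du tau_sphere e1 e2] t tn P1
      unfolding f_def[abs_def] h_def by simp
    have nT: "norm (T t) = k" using t k_pos by (simp add: T_def)
    have t01: "t \<in> {0..L}" "k * norm (u t) > 0" using t k_pos by auto
    have "(tau has_vector_derivative tau' t) (at t within {0..L})"
      using dtau t tn by (auto intro: has_vector_derivative_at_within)
    then obtain a b c where abc: "(a, b, c) \<noteq> (0, 0, 0)" "a *\<^sub>R tau t + b *\<^sub>R tau' t + c *\<^sub>R lam = 0"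
      using dep t01 by blast
    have "lam = (lam \<bullet> tau t) *\<^sub>R tau t + ((lam \<bullet> T t) / k\<^sup>2) *\<^sub>R T t"
      by (rule dep_identity[OF _ P2 nT k_pos abc(1)]) (use tau_sphere t01 abc(2) P1 in auto)
    thus ?thesis using P1 P2 P3 P4 by (simp add: g_def h_def)
  qed
  have cuW: "continuous_on W u" by (rule continuous_on_subset[OF cuo]) (auto simp: W_def)
  have cT: "continuous_on W T"
    unfolding T_def by (intro continuous_intros cuW) (auto simp: W_def)
  have ch: "continuous_on W h" unfolding h_def by (intro continuous_intros cT)
  have ctW: "continuous_on W tau" by (rule continuous_on_subset[OF ctau]) (auto simp: W_def)
  have cg: "continuous_on {0..L} g" unfolding g_def by (intro continuous_intros ctau)
  have cgW: "continuous_on W g" by (rule continuous_on_subset[OF cg]) (auto simp: W_def)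
  have ident: "lam = g t *\<^sub>R tau t + (h t / k\<^sup>2) *\<^sub>R T t" if "t \<in> W" for t
  proof (rule ae_cont_eq[OF Wopen negN _ _ _ that, of "\<lambda>_. lam"])
    show "continuous_on W (\<lambda>t. g t *\<^sub>R tau t + (h t / k\<^sup>2) *\<^sub>R T t)"
      by (intro continuous_intros cgW ctW ch cT) (use k_pos in simp)
    show "continuous_on W (\<lambda>_. lam)" by (rule continuous_on_const)
    fix s assume "s \<in> W - N"
    thus "lam = g s *\<^sub>R tau s + (h s / k\<^sup>2) *\<^sub>R T s" using pw by blast
  qed
  have hnz: "h t \<noteq> 0" if "t \<in> W" "\<bar>g t\<bar> < 1" for t
  proof
    assume "h t = 0"
    hence "lam = g t *\<^sub>R tau t" using ident[OF that(1)] by simp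
    hence "norm lam = \<bar>g t\<bar>" using tau_sphere that(1) by (auto simp: W_def)
    thus False using lam that(2) by simp
  qed
  have lipf: "(k * Cu)-lipschitz_on {0..L} f"
  proof (rule lipschitz_onI)
    fix x y assume xy: "x \<in> {0..L}" "y \<in> {0..L}"
    have "dist (f x) (f y) = k * \<bar>norm (u x) - norm (u y)\<bar>"
      using k_pos by (simp add: f_def dist_real_def abs_mult right_diff_distrib[symmetric])
    also have "\<dots> \<le> k * dist (u x) (u y)"
      using k_pos norm_triangle_ineq3 by (simp add: dist_norm)
    also have "\<dots> \<le> k * (Cu * dist x y)"
      using lipschitz_onD[OF Cu xy] k_pos by simp
    finally show "dist (f x) (f y) \<le> k * Cu * dist x y" by simp
  next
    show "0 \<le> k * Cu" using lipschitz_on_nonneg[OF Cu] k_pos by simp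
  qed
  have lipg: "Ct-lipschitz_on {0..L} g"
  proof (rule lipschitz_onI)
    fix x y assume xy: "x \<in> {0..L}" "y \<in> {0..L}"
    have "dist (g x) (g y) = \<bar>lam \<bullet> (tau x - tau y)\<bar>"
      by (simp add: g_def dist_real_def inner_diff_right)
    also have "\<dots> \<le> norm lam * norm (tau x - tau y)" by (rule Cauchy_Schwarz_ineq2)
    also have "\<dots> \<le> Ct * dist x y" using lam lipschitz_onD[OF Ct xy] by (simp add: dist_norm)
    finally show "dist (g x) (g y) \<le> Ct * dist x y" .
  next
    show "0 \<le> Ct" using Ct lipschitz_on_nonneg by blast
  qed

  have gap: "gapctx f g h beta a b N (k * Cu) Ct"
    if ab: "a < b" "a \<in> Z" "b \<in> Z" "\<forall>t\<in>Z. \<not> (a < t \<and> t < b)" for a b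
  proof -
    have a0: "a \<in> {0..L}" "b \<in> {0..L}" using Zsub ab by auto
    have sub: "{a..b} \<subseteq> {0..L}" using a0 by auto
    have inW: "t \<in> W" if "t \<in> {a<..<b}" for t
    proof -
      have "t \<in> I" using betw[of a b t] ZI ab that by auto
      moreover have "t \<notin> Z" using ab(4) that by auto
      ultimately have "u t \<noteq> 0" by (rule IZ)
      thus ?thesis using that a0 by (auto simp: W_def)
    qed
    show ?thesis
    proof (unfold_locales)
      show "a < b" by (rule ab(1))
      show "(k*Cu)-lipschitz_on {a..b} f" by (rule lipschitz_on_subset[OF lipf sub])
      show "Ct-lipschitz_on {a..b} g" by (rule lipschitz_on_subset[OF lipg sub])
      show "negligible N" by (rule negN)
      show "\<And>t. t \<in> {a<..<b} - N \<Longrightarrow> (g has_real_derivative h t) (at t)"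
        using pw inW by blast
      show "\<And>t. t \<in> {a<..<b} - N \<Longrightarrow> (f has_real_derivative beta t * h t) (at t)"
        using pw inW by blast
      show "continuous_on {a<..<b} h" by (rule continuous_on_subset[OF ch]) (use inW in blast)
      show "\<And>t. t \<in> {a<..<b} \<Longrightarrow> \<bar>g t\<bar> < 1 \<Longrightarrow> h t \<noteq> 0" using hnz inW by blast
      show "\<And>t. t \<in> {a<..<b} \<Longrightarrow> beta t > 0" using beta_pos sub by auto
      show "f a = 0" using Zu ab by (simp add: f_def)
      show "f b = 0" using Zu ab by (simp add: f_def)
      show "\<And>t. t \<in> {a<..<b} \<Longrightarrow> f t > 0" using inW k_pos by (auto simp: f_def W_def)
      show "\<bar>g a\<bar> < 1" using Zg ab by blast
      show "\<bar>g b\<bar> < 1" using Zg ab by blast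
      show "\<And>t. t \<in> {a..b} \<Longrightarrow> \<bar>g t\<bar> \<le> 1" using gle sub by blast
    qed
  qed
  have gap_ext: "\<exists>a b. y \<le> a \<and> a < b \<and> b \<le> w \<and> a \<in> Z \<and> b \<in> Z \<and> (\<forall>s\<in>Z. \<not> (a < s \<and> s < b))"
    if yw: "y \<in> Z" "w \<in> Z" "t \<in> {y<..<w}" "t \<notin> Z" for y w t
  proof -
    define Lz where "Lz = Z \<inter> {y..w} \<inter> {..t}"
    define Rz where "Rz = Z \<inter> {y..w} \<inter> {t..}"
    have cl: "closed Lz" "closed Rz" unfolding Lz_def Rz_def using clo[OF yw(1,2)] by auto
    have ne: "y \<in> Lz" "w \<in> Rz" using yw by (auto simp: Lz_def Rz_def)
    define a where "a = Sup Lz"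
    define b where "b = Inf Rz"
    have aL: "a \<in> Lz" unfolding a_def
      by (rule closed_contains_Sup) (use cl ne in \<open>auto simp: Lz_def bdd_above_def\<close>)
    have bR: "b \<in> Rz" unfolding b_def
      by (rule closed_contains_Inf) (use cl ne in \<open>auto simp: Rz_def bdd_below_def\<close>)
    have ale: "x \<le> a" if "x \<in> Lz" for x unfolding a_def
      by (rule cSup_upper) (use that in \<open>auto simp: Lz_def bdd_above_def\<close>)
    have bge: "b \<le> x" if "x \<in> Rz" for x unfolding b_def
      by (rule cInf_lower) (use that in \<open>auto simp: Rz_def bdd_below_def\<close>)
    have "a < t" "t < b" using aL bR yw(4) by (auto simp: Lz_def Rz_def less_le)
    moreover have "\<forall>s\<in>Z. \<not> (a < s \<and> s < b)"
    proof (intro ballI notI)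
      fix s assume s: "s \<in> Z" "a < s \<and> s < b"
      have "y \<le> s" "s \<le> w" using s aL bR by (auto simp: Lz_def Rz_def)
      show False
      proof (cases "s \<le> t")
        case True thus False using ale[of s] s \<open>y \<le> s\<close> \<open>s \<le> w\<close> by (auto simp: Lz_def)
      next
        case False thus False using bge[of s] s \<open>y \<le> s\<close> \<open>s \<le> w\<close> by (auto simp: Rz_def)
      qed
    qed
    ultimately show ?thesis using aL bR by (intro exI[of _ a] exI[of _ b]) (auto simp: Lz_def Rz_def)
  qed
  have iso_core: False
    if yw: "y < w" "y \<in> Z" "w \<in> Z" "\<forall>t\<in>{y..w}. \<bar>g t\<bar> < 1" for y w
  proof (cases "\<exists>t\<in>{y<..<w}. t \<notin> Z")
    case True
    then obtain t where t: "t \<in> {y<..<w}" "t \<notin> Z" by blast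
    obtain a b where ab: "y \<le> a" "a < b" "b \<le> w" "a \<in> Z" "b \<in> Z" "\<forall>s\<in>Z. \<not> (a < s \<and> s < b)"
      using gap_ext[OF yw(2,3) t] by blast
    interpret gp: gapctx f g h beta a b N "k * Cu" Ct using gap[of a b] ab by blast
    obtain s where s: "s \<in> {a<..<b}" "g s = 1" using gp.GL0 by blast
    hence "s \<in> {y..w}" using ab by auto
    hence "\<bar>g s\<bar> < 1" using yw(4) by blast
    thus False using s(2) by simp
  next
    case False
    have "\<not> negligible {y<..<w}" using yw(1) by (intro open_not_negligible) auto
    then obtain t where t: "t \<in> {y<..<w}" "t \<notin> N" using negligible_subset[OF negN, of "{y<..<w}"] by blast
    have t0: "t \<in> {0<..<L}" using t Zsub yw by fastforce
    have tn: "t \<notin> N2" "t \<notin> N3" using t by (auto simp: N_def)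
    have u0: "u s = 0" if "s \<in> {y<..<w}" for s using False that Zu by blast
    have du: "(u has_vector_derivative u' t) (at t)" using N2(2) t0 tn by blast
    have "((\<lambda>_. 0) has_vector_derivative u' t) (at t)"
      by (rule has_vector_derivative_transform_within_open[OF du, of "{y<..<w}"]) (use t u0 in auto)
    hence u'0: "u' t = 0" using vector_derivative_unique_at has_vector_derivative_const by metis
    have "u' t + (u t \<bullet> tau' t) *\<^sub>R tau t = beta t *\<^sub>R (lam - (lam \<bullet> tau t) *\<^sub>R tau t)"
      using N3(2) t0 tn by blast
    hence "beta t *\<^sub>R (lam - (lam \<bullet> tau t) *\<^sub>R tau t) = 0" using u'0 u0[OF t(1)] by simp
    moreover have "beta t > 0" using beta_pos t0 by auto
    ultimately have "lam = g t *\<^sub>R tau t" by (simp add: g_def)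
    hence "norm lam = \<bar>g t\<bar>" using tau_sphere t0 by auto
    moreover have "\<bar>g t\<bar> < 1" using yw(4) t by auto
    ultimately show False using lam by simp
  qed
  have iso: "\<exists>r>0. \<forall>w\<in>Z. \<bar>w - z\<bar> < r \<longrightarrow> w = z" if z: "z \<in> Z" for z
  proof -
    have gz: "\<bar>g z\<bar> < 1" using Zg z by blast
    have z0: "z \<in> {0..L}" using Zsub z by auto
    obtain r where r: "r > 0" "\<forall>x'\<in>{0..L}. dist x' z < r \<longrightarrow> dist (g x') (g z) < 1 - \<bar>g z\<bar>"
      using cg z0 gz unfolding continuous_on_iff by (metis diff_gt_0_iff_gt)
    have gr: "\<bar>g x\<bar> < 1" if "x \<in> {0..L}" "\<bar>x - z\<bar> < r" for x
      using r(2)[rule_format, of x] that by (auto simp: dist_real_def)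
    show ?thesis
    proof (intro exI[of _ r] conjI ballI impI)
      show "r > 0" by (rule r(1))
      fix w assume w: "w \<in> Z" "\<bar>w - z\<bar> < r"
      show "w = z"
      proof (rule ccontr)
        assume "w \<noteq> z"
        show False
        proof (rule iso_core[of "min w z" "max w z"])
          show "min w z < max w z" using \<open>w \<noteq> z\<close> by auto
          show "min w z \<in> Z" "max w z \<in> Z" using w z by (auto simp: min_def max_def)
          show "\<forall>t\<in>{min w z..max w z}. \<bar>g t\<bar> < 1"
          proof
            fix t assume t: "t \<in> {min w z..max w z}"
            have "t \<in> {0..L}" using t Zsub w z by (auto simp: min_def max_def split: if_splits)
            moreover have "\<bar>t - z\<bar> < r" using t w by (auto simp: min_def max_def split: if_splits)
            ultimately show "\<bar>g t\<bar> < 1" by (rule gr)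
          qed
        qed
      qed
    qed
  qed

  have finZ: "finite Z"
  proof (rule ccontr)
    assume infZ: "infinite Z"
    have bZ: "bdd_above Z" "bdd_below Z" using Zsub
      unfolding bdd_above_def bdd_below_def by (meson atLeastAtMost_iff subsetD)+
    have "\<exists>zs. ((\<forall>n. zs n < zs (Suc n)) \<or> (\<forall>n. zs (Suc n) < zs n)) \<and> (\<forall>n. zs n \<in> Z) \<and>
      (\<forall>n. \<forall>t\<in>Z. \<not> (min (zs n) (zs (Suc n)) < t \<and> t < max (zs n) (zs (Suc n)))) \<and> convergent zs"
      by (rule consec[of Z]) (use bZ iso clo infZ in blast)+
    then obtain zs where zs: "(\<forall>n. zs n < zs (Suc n)) \<or> (\<forall>n. zs (Suc n) < zs n)" "\<forall>n. zs n \<in> Z"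
      "\<forall>n. \<forall>t\<in>Z. \<not> (min (zs n) (zs (Suc n)) < t \<and> t < max (zs n) (zs (Suc n)))" "convergent zs"
      by blast
    obtain e where ze: "zs \<longlonglongrightarrow> e" using zs(4) convergent_def by blast
    define lo where "lo n = min (zs n) (zs (Suc n))" for n
    define hi where "hi n = max (zs n) (zs (Suc n))" for n
    have lohi: "lo n < hi n" "lo n \<in> Z" "hi n \<in> Z" "\<forall>t\<in>Z. \<not> (lo n < t \<and> t < hi n)" for n
    proof -
      have "zs n \<noteq> zs (Suc n)" using zs(1) by (metis less_irrefl)
      thus "lo n < hi n" by (auto simp: lo_def hi_def min_def max_def)
      show "lo n \<in> Z" "hi n \<in> Z" using zs(2) by (auto simp: lo_def hi_def min_def max_def)
      show "\<forall>t\<in>Z. \<not> (lo n < t \<and> t < hi n)" using zs(3) by (simp add: lo_def hi_def)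
    qed
    have zne: "zs n \<noteq> e" for n
      using zs(1)
    proof
      assume inc: "\<forall>n. zs n < zs (Suc n)"
      have "incseq zs" using inc by (intro incseq_SucI less_imp_le) auto
      hence "zs (Suc n) \<le> e" using incseq_le ze by blast
      thus ?thesis using inc by (metis not_le)
    next
      assume dec: "\<forall>n. zs (Suc n) < zs n"
      have "decseq zs" using dec by (intro decseq_SucI less_imp_le) auto
      hence "e \<le> zs (Suc n)" using decseq_ge ze by blast
      thus ?thesis using dec by (metis not_le)
    qed
    have zs01: "zs n \<in> {0..L}" for n using zs(2) Zsub by auto
    have e0: "e \<in> {0..L}"
    proof -
      have "0 \<le> e" by (rule LIMSEQ_le_const[OF ze]) (use zs01 in auto)
      moreover have "e \<le> L" by (rule LIMSEQ_le_const2[OF ze]) (use zs01 in auto)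
      ultimately show ?thesis by simp
    qed
    have ev01: "\<forall>\<^sub>F n in sequentially. zs n \<in> {0..L}" using zs01 by simp
    have "(\<lambda>n. u (zs n)) \<longlonglongrightarrow> u e" by (rule continuous_on_tendsto_compose[OF cu ze e0 ev01])
    moreover have "(\<lambda>n. u (zs n)) = (\<lambda>n. 0)"
    proof
      fix n show "u (zs n) = 0" using Zu zs(2) by blast
    qed
    ultimately have "(\<lambda>n. 0) \<longlonglongrightarrow> u e" by simp
    hence ue: "u e = 0" using LIMSEQ_unique[OF tendsto_const] by metis
    have ge: "(\<lambda>n. g (zs n)) \<longlonglongrightarrow> g e" by (rule continuous_on_tendsto_compose[OF cg ze e0 ev01])
    have eI: "e \<notin> I"
    proof
      assume "e \<in> I"
      hence eZ: "e \<in> Z" using ue OM_iff by (auto simp: Z_def)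
      obtain r where r: "r > 0" "\<forall>w\<in>Z. \<bar>w - e\<bar> < r \<longrightarrow> w = e" using iso[OF eZ] by blast
      obtain n0 where "\<forall>n\<ge>n0. dist (zs n) e < r" using LIMSEQ_D[OF ze r(1)] by (auto simp: dist_norm)
      hence "\<bar>zs n0 - e\<bar> < r" by (auto simp: dist_real_def)
      hence "zs n0 = e" using r(2) zs(2) by blast
      thus False using zne by blast
    qed
    have eA: "e \<notin> A"
    proof
      assume eA: "e \<in> A"
      have ecl: "e \<in> closure I" unfolding closure_sequential using zs(2) ZI ze by blast
      have "connected (I \<union> {e})"
        by (rule connected_intermediate_closure[OF Ic(3)]) (use ecl closure_subset in auto)
      moreover have "I \<union> {e} \<subseteq> A \<union> OM" using Ic(2) eA by auto
      ultimately have "I \<union> {e} = I" using Ic(4)[of "I \<union> {e}"] by blast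
      thus False using eI by blast
    qed
    have "tau e = lam \<or> tau e = - lam" using eA e0 by (auto simp: A_def)
    hence gpm: "g e = 1 \<or> g e = -1" using lam1 by (auto simp: g_def)
    have close: "\<exists>n0. \<forall>n\<ge>n0. \<forall>t\<in>{lo n..hi n}. \<bar>t - e\<bar> < \<delta>" if dpos: "\<delta> > 0" for \<delta>
    proof -
      obtain n0 where n0: "\<forall>n\<ge>n0. dist (zs n) e < \<delta>" using LIMSEQ_D[OF ze dpos] by (auto simp: dist_norm)
      show ?thesis
      proof (intro exI[of _ n0] allI impI ballI)
        fix n t assume "n0 \<le> n" "t \<in> {lo n..hi n}"
        moreover have "\<bar>zs n - e\<bar> < \<delta>" "\<bar>zs (Suc n) - e\<bar> < \<delta>"
          using n0 \<open>n0 \<le> n\<close> by (auto simp: dist_real_def)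
        ultimately show "\<bar>t - e\<bar> < \<delta>" by (auto simp: lo_def hi_def min_def max_def split: if_splits)
      qed
    qed
    have gnear: "\<exists>\<delta>>0. \<forall>t\<in>{0..L}. \<bar>t - e\<bar> < \<delta> \<longrightarrow> \<bar>g t - g e\<bar> < 1"
      using cg e0 unfolding continuous_on_iff by (auto simp: dist_real_def)
    then obtain \<delta> where \<delta>: "\<delta> > 0" "\<forall>t\<in>{0..L}. \<bar>t - e\<bar> < \<delta> \<longrightarrow> \<bar>g t - g e\<bar> < 1" by blast
    obtain n0 where n0: "\<forall>n\<ge>n0. \<forall>t\<in>{lo n..hi n}. \<bar>t - e\<bar> < \<delta>" using close[OF \<delta>(1)] by blast
    have lohi01: "{lo n..hi n} \<subseteq> {0..L}" for n using lohi(2,3)[of n] Zsub by auto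
    have gnear2: "\<bar>g t - g e\<bar> < 1" if "n \<ge> n0" "t \<in> {lo n..hi n}" for n t
      using \<delta>(2) n0 that lohi01 by blast
    show False
    proof (cases "g e = -1")
      case True
      interpret gp: gapctx f g h beta "lo n0" "hi n0" N "k * Cu" Ct using gap lohi by blast
      obtain s where s: "s \<in> {lo n0<..<hi n0}" "g s = 1" using gp.GL0 by blast
      have "\<bar>g s - g e\<bar> < 1" using gnear2[of n0 s] s by auto
      thus False using s True by simp
    next
      case False
      hence ge1: "g e = 1" using gpm by simp
      have gm: "g t > -1" if "n \<ge> n0" "t \<in> {lo n..hi n}" for n t
        using gnear2[OF that] ge1 by simp
      obtain Bv where Bv: "\<forall>xs. sorted xs \<and> set xs \<subseteq> {0..L} \<longrightarrow>
          (\<Sum>i<length xs - 1. \<bar>beta (xs ! Suc i) - beta (xs ! i)\<bar>) \<le> Bv"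
        using beta_bv unfolding bounded_variation_on_def by blast
      have bup: "beta t \<le> beta 0 + Bv" if "t \<in> {0..L}" for t
      proof -
        have "sorted [0, t] \<and> set [0, t] \<subseteq> {0..L}" using that L by auto
        hence "(\<Sum>i<length [0, t] - 1. \<bar>beta ([0, t] ! Suc i) - beta ([0, t] ! i)\<bar>) \<le> Bv"
          using Bv by blast
        hence "\<bar>beta t - beta 0\<bar> \<le> Bv" by simp
        thus ?thesis by linarith
      qed
      obtain B0 where B0: "\<forall>t\<in>{0..L}. 1 / beta t \<le> B0" using beta_inv_bdd by blast
      have B0pos: "B0 > 0"
      proof -
        have "0 \<in> {0..L}" using L by auto
        hence "1 / beta 0 \<le> B0" "beta 0 > 0" using B0 beta_pos by auto
        moreover have "1 / beta 0 > 0" using \<open>beta 0 > 0\<close> by simp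
        ultimately show ?thesis by linarith
      qed
      define m0 where "m0 = 1 / B0"
      have m0pos: "m0 > 0" using B0pos by (simp add: m0_def)
      have blow: "m0 \<le> beta t" if "t \<in> {0..L}" for t
      proof -
        have "1 / beta t \<le> B0" "beta t > 0" using B0 beta_pos that by auto
        thus ?thesis using B0pos by (simp add: m0_def field_simps)
      qed
      define mm where "mm n = Inf (beta ` {lo n..hi n})" for n
      define MM where "MM n = Sup (beta ` {lo n..hi n})" for n
      have ne: "beta ` {lo n..hi n} \<noteq> {}" for n using lohi(1)[of n] by auto
      have bdda: "bdd_above (beta ` {lo n..hi n})" for n
        unfolding bdd_above_def using bup lohi01[of n] by blast
      have bddb: "bdd_below (beta ` {lo n..hi n})" for n
        unfolding bdd_below_def using blow lohi01[of n] by blast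
      have mb: "mm n \<le> beta t" if "t \<in> {lo n..hi n}" for n t
        unfolding mm_def using that bddb[of n] by (intro cInf_lower) auto
      have Mb: "beta t \<le> MM n" if "t \<in> {lo n..hi n}" for n t
        unfolding MM_def using that bdda[of n] by (intro cSup_upper) auto
      have m0m: "m0 \<le> mm n" for n
        unfolding mm_def using ne[of n] blow lohi01[of n] by (intro cInf_greatest) auto
      have mM: "mm n \<le> MM n" for n
        using mb[of "lo n" n] Mb[of "lo n" n] lohi(1)[of n] by auto
      define x where "x n = 1 - g (zs n)" for n
      have rec: "mm n * x n \<le> MM n * x (Suc n)" if "n \<ge> n0" for n
      proof -
        interpret gp: gapctx f g h beta "lo n" "hi n" N "k * Cu" Ct using gap lohi by blast
        have "mm n * (1 - g (lo n)) \<le> MM n * (1 - g (hi n)) \<and> mm n * (1 - g (hi n)) \<le> MM n * (1 - g (lo n))"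
          by (rule gp.GL) (use gm[OF that] mb Mb in auto)
        thus ?thesis by (cases "zs n \<le> zs (Suc n)") (auto simp: lo_def hi_def min_def max_def x_def)
      qed
      have summ: "summable (\<lambda>n. MM n - mm n)"
      proof (rule summableI_nonneg_bounded)
        show "0 \<le> MM n - mm n" for n using mM[of n] by simp
        fix K
        have "\<forall>n. \<exists>p. p \<in> {lo n..hi n} \<and> beta p > MM n - (1/2)^n"
        proof
          fix n
          have "MM n - (1/2)^n < Sup (beta ` {lo n..hi n})" by (simp add: MM_def)
          then obtain y where "y \<in> beta ` {lo n..hi n}" "MM n - (1/2)^n < y"
            using less_cSupE[OF _ ne[of n]] by blast
          thus "\<exists>p. p \<in> {lo n..hi n} \<and> beta p > MM n - (1/2)^n" by blast
        qed
        then obtain p where p: "\<And>n. p n \<in> {lo n..hi n}" "\<And>n. beta (p n) > MM n - (1/2)^n" by metis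
        have "\<forall>n. \<exists>q. q \<in> {lo n..hi n} \<and> beta q < mm n + (1/2)^n"
        proof
          fix n
          have "Inf (beta ` {lo n..hi n}) < mm n + (1/2)^n" by (simp add: mm_def)
          then obtain y where "y \<in> beta ` {lo n..hi n}" "y < mm n + (1/2)^n"
            using cInf_lessD[OF ne[of n]] by blast
          thus "\<exists>q. q \<in> {lo n..hi n} \<and> beta q < mm n + (1/2)^n" by blast
        qed
        then obtain q where q: "\<And>n. q n \<in> {lo n..hi n}" "\<And>n. beta (q n) < mm n + (1/2)^n" by metis
        define P where "P n = min (p n) (q n)" for n
        define Q where "Q n = max (p n) (q n)" for n
        have PQ: "P n \<le> Q n" "lo n \<le> P n" "Q n \<le> hi n" "P n \<in> {0..L}" "Q n \<in> {0..L}" for n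
          using p(1)[of n] q(1)[of n] lohi01[of n] by (auto simp: P_def Q_def)
        have FPQ: "\<bar>beta (Q n) - beta (P n)\<bar> = \<bar>beta (p n) - beta (q n)\<bar>" for n
          by (auto simp: P_def Q_def min_def max_def abs_minus_commute)
        have bound: "MM n - mm n \<le> \<bar>beta (Q n) - beta (P n)\<bar> + 2 * (1/2)^n" for n
          using p(2)[of n] q(2)[of n] FPQ[of n] by linarith
        have bvK: "(\<Sum>n<K. \<bar>beta (Q n) - beta (P n)\<bar>) \<le> Bv"
          using zs(1)
        proof
          assume inc: "\<forall>n. zs n < zs (Suc n)"
          have hl: "Q n \<le> P (Suc n)" for n
          proof -
            have "hi n = zs (Suc n)" "lo (Suc n) = zs (Suc n)"
              using inc by (auto simp: lo_def hi_def min_def max_def less_imp_le)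
            thus ?thesis using PQ[of n] PQ[of "Suc n"] by linarith
          qed
          show ?thesis by (rule bv_pairs[OF Bv]) (use PQ hl in auto)
        next
          assume dec: "\<forall>n. zs (Suc n) < zs n"
          have hl: "Q (Suc n) \<le> P n" for n
          proof -
            have "lo n = zs (Suc n)" "hi (Suc n) = zs (Suc n)"
              using dec[rule_format, of n] dec[rule_format, of "Suc n"]
              by (auto simp: lo_def hi_def min_def max_def)
            thus ?thesis using PQ[of n] PQ[of "Suc n"] by linarith
          qed
          have "(\<Sum>j<K. \<bar>beta (Q (K - Suc j)) - beta (P (K - Suc j))\<bar>) \<le> Bv"
          proof (rule bv_pairs[OF Bv])
            fix j assume "Suc j < K"
            hence "Suc (K - Suc (Suc j)) = K - Suc j" by simp
            thus "Q (K - Suc j) \<le> P (K - Suc (Suc j))" using hl[of "K - Suc (Suc j)"] by simp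
          qed (use PQ in auto)
          thus ?thesis using sum_reflect_lt[of "\<lambda>n. \<bar>beta (Q n) - beta (P n)\<bar>" K] by simp
        qed
        have geo: "(\<Sum>n<K. 2 * (1/2::real)^n) \<le> 4"
        proof -
          have "(\<Sum>n<K. (1/2::real)^n) = (1 - (1/2)^K) / (1 - 1/2)" by (simp add: sum_gp_strict)
          also have "\<dots> \<le> 2" by simp
          finally show ?thesis by (simp add: sum_distrib_left[symmetric])
        qed
        have "(\<Sum>n<K. MM n - mm n) \<le> (\<Sum>n<K. \<bar>beta (Q n) - beta (P n)\<bar> + 2 * (1/2)^n)"
          by (intro sum_mono bound)
        also have "\<dots> = (\<Sum>n<K. \<bar>beta (Q n) - beta (P n)\<bar>) + (\<Sum>n<K. 2 * (1/2::real)^n)"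
          by (simp add: sum.distrib)
        also have "\<dots> \<le> Bv + 4" using bvK geo by linarith
        finally show "(\<Sum>n<K. MM n - mm n) \<le> Bv + 4" .
      qed
      have x0: "x \<longlonglongrightarrow> 0"
      proof -
        have "(\<lambda>n. 1 - g (zs n)) \<longlonglongrightarrow> 1 - g e" by (intro tendsto_intros ge)
        thus ?thesis using ge1 by (simp add: x_def[abs_def])
      qed
      have xpos: "x n > 0" for n using Zg zs(2) by (auto simp: x_def abs_less_iff)
      show False by (rule amplitude[of n0 mm x MM m0, OF rec m0pos m0m mM summ xpos x0])
    qed
  qed
  show ?thesis using finZ by (simp add: Z_def OM_def)
qed

end
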